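(* Let $X$ be a real Hilbert space, let $A,B\colon X\rightrightarrows X$ be maximally monotone, let $T:=T_{(A,B)}$, $v:=P_{\overline{\operatorname{ran}}(\mathrm{Id}-T)}0$. Then: (i) $Z_v=J_{-v+A}(\operatorname{Fix}(T_{-v}))=J_A(\operatorname{Fix}(T_{-v})+v)=J_A(\operatorname{Fix}(v+T))$; (ii) $K_v=(\mathrm{Id}-J_{-v+A})(\operatorname{Fix}(T_{-v}))$; (iii) $K_v\neq\varnothing\iff Z_v\neq\varnothing\iff v\in\operatorname{ran}(\mathrm{Id}-T)$.
   Context: $J_A:=(\mathrm{Id}+A)^{-1}$ is the resolvent, $R_A:=2J_A-\mathrm{Id}$, and the Douglas–Rachford operator is $T_{(A,B)}:=\tfrac12(\mathrm{Id}+R_BR_A)=\mathrm{Id}-J_A+J_BR_A$. For an operator $C$ and $w\in X$: $C^{\vee}:=(-\mathrm{Id})\circ C\circ(-\mathrm{Id})$, $C^{-\vee}:=(C^{-1})^\vee$. The normal pair is $({}_vA,B_v)$ with ${}_vA:=-v+A$ (i.e. $x\mapsto Ax-v$) and $B_v:=B(\cdot-v)$. The set of normal solutions is $Z_v:=({}_vA+B_v)^{-1}(0)$ and the set of dual normal solutions is $K_v:=(({}_vA)^{-1}+(B_v)^{-\vee})^{-1}(0)$. $T_{-v}x:=T(x+v)$, $(v+T)x:=v+Tx$, $\operatorname{Fix}$ is the fixed point set, and $\overline{\operatorname{ran}}$ denotes closure of the range. *)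

theory Defs
  imports "HOL-Analysis.Analysis"
begin

text \<open>Set-valued operators X \<rightrightarrows> X are represented as functions 'a \<Rightarrow> 'a set.\<close>

definition mono_op :: "('a::real_inner \<Rightarrow> 'a set) \<Rightarrow> bool" where
  "mono_op A \<longleftrightarrow> (\<forall>x y u w. u \<in> A x \<longrightarrow> w \<in> A y \<longrightarrow> inner (x - y) (u - w) \<ge> 0)"

definition max_mono_op :: "('a::real_inner \<Rightarrow> 'a set) \<Rightarrow> bool" where
  "max_mono_op A \<longleftrightarrow> mono_op A \<and>
     (\<forall>B. mono_op B \<and> (\<forall>x. A x \<subseteq> B x) \<longrightarrow> B = A)"

text \<open>Resolvent J_A = (Id + A)^{-1}: J_A x is the (unique, for maximally monotone A) y with x \<in> y + A y.\<close>
definition resolvent :: "('a::real_inner \<Rightarrow> 'a set) \<Rightarrow> 'a \<Rightarrow> 'a" where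
  "resolvent A x = (THE y. x - y \<in> A y)"

definition reflected_resolvent :: "('a::real_inner \<Rightarrow> 'a set) \<Rightarrow> 'a \<Rightarrow> 'a" where
  "reflected_resolvent A x = 2 *\<^sub>R resolvent A x - x"

definition DR_op :: "('a::real_inner \<Rightarrow> 'a set) \<Rightarrow> ('a \<Rightarrow> 'a set) \<Rightarrow> 'a \<Rightarrow> 'a" where
  "DR_op A B x = x - resolvent A x + resolvent B (reflected_resolvent A x)"

definition proj :: "'a::real_normed_vector set \<Rightarrow> 'a \<Rightarrow> 'a" where
  "proj S x = (THE p. p \<in> S \<and> (\<forall>y\<in>S. norm (x - p) \<le> norm (x - y)))"

definition op_inv :: "('a \<Rightarrow> 'b set) \<Rightarrow> 'b \<Rightarrow> 'a set" where
  "op_inv C u = {x. u \<in> C x}"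

definition op_vee :: "('a::ab_group_add \<Rightarrow> 'a set) \<Rightarrow> 'a \<Rightarrow> 'a set" where
  "op_vee C x = uminus ` C (- x)"

definition op_sum :: "('a \<Rightarrow> 'b::plus set) \<Rightarrow> ('a \<Rightarrow> 'b set) \<Rightarrow> 'a \<Rightarrow> 'b set" where
  "op_sum C D x = {c + d | c d. c \<in> C x \<and> d \<in> D x}"

text \<open>Left shift  _vA := -v + A, i.e. x \<mapsto> A x - v.\<close>
definition lshift :: "'a::ab_group_add \<Rightarrow> ('a \<Rightarrow> 'a set) \<Rightarrow> 'a \<Rightarrow> 'a set" where
  "lshift v A x = (\<lambda>u. u - v) ` A x"

definition rshift :: "('a::ab_group_add \<Rightarrow> 'a set) \<Rightarrow> 'a \<Rightarrow> 'a \<Rightarrow> 'a set" where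
  "rshift B v x = B (x - v)"

definition normal_solutions :: "('a::ab_group_add \<Rightarrow> 'a set) \<Rightarrow> ('a \<Rightarrow> 'a set) \<Rightarrow> 'a \<Rightarrow> 'a set" where
  "normal_solutions A B v = op_inv (op_sum (lshift v A) (rshift B v)) 0"

definition dual_normal_solutions :: "('a::ab_group_add \<Rightarrow> 'a set) \<Rightarrow> ('a \<Rightarrow> 'a set) \<Rightarrow> 'a \<Rightarrow> 'a set" where
  "dual_normal_solutions A B v =
     op_inv (op_sum (op_inv (lshift v A)) (op_vee (op_inv (rshift B v)))) 0"

definition Fix :: "('a \<Rightarrow> 'a) \<Rightarrow> 'a set" where
  "Fix T = {x. T x = x}"

end

theory Submission
  imports Defs
begin

definition mf :: "'a::real_inner \<Rightarrow> 'a \<Rightarrow> 'a \<Rightarrow> 'a \<Rightarrow> real" where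
  "mf w y b x = inner (x - y) (x - w + b)"
definition mc :: "'a::real_inner \<Rightarrow> 'a \<Rightarrow> 'a \<Rightarrow> 'a" where
  "mc w y b = (1/2) *\<^sub>R (y + w - b)"
definition mr :: "'a::real_inner \<Rightarrow> 'a \<Rightarrow> 'a \<Rightarrow> real" where
  "mr w y b = norm (y - w + b) / 2"

lemma mf_eq: "mf w y b x = (norm (x - mc w y b))\<^sup>2 - (mr w y b)\<^sup>2"
proof -
  define a where "a = x - y"
  define c where "c = x - w + b"
  have 1: "x - mc w y b = (1/2) *\<^sub>R (a + c)"
  proof -
    have h: "(1/2) *\<^sub>R x + (1/2) *\<^sub>R x = x" by (simp add: scaleR_add_left[symmetric])
    show ?thesis by (simp add: a_def c_def mc_def algebra_simps) (metis h add.commute)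
  qed
  have 2: "mr w y b = norm ((1/2) *\<^sub>R (c - a))"
  proof -
    have "c - a = y - w + b" by (simp add: a_def c_def algebra_simps)
    then show ?thesis by (simp add: mr_def)
  qed
  show ?thesis unfolding mf_def 1 2 a_def[symmetric] c_def[symmetric]
    by (simp add: power2_norm_eq_inner inner_add inner_diff inner_commute algebra_simps)
qed

lemma mf_le0_iff: "mf w y b x \<le> 0 \<longleftrightarrow> x \<in> cball (mc w y b) (mr w y b)"
proof -
  have "mr w y b \<ge> 0" by (simp add: mr_def)
  then show ?thesis
    by (simp add: mf_eq dist_norm norm_minus_commute abs_le_square_iff[symmetric])
qed

lemma mono_sum:
  fixes A :: "'a::real_inner \<Rightarrow> 'a set"
  assumes "mono_op A" "finite S" "\<And>i. i\<in>S \<Longrightarrow> u i \<ge> 0" "sum u S = 1"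
    "\<And>i. i\<in>S \<Longrightarrow> bb i \<in> A (yy i)"
  shows "inner (\<Sum>i\<in>S. u i *\<^sub>R yy i) (\<Sum>i\<in>S. u i *\<^sub>R bb i) \<le> (\<Sum>i\<in>S. u i * inner (yy i) (bb i))"
proof -
  have nn: "0 \<le> (\<Sum>i\<in>S. \<Sum>j\<in>S. u i * u j * inner (yy i - yy j) (bb i - bb j))"
    using assms(1,3,5) unfolding mono_op_def
    by (intro sum_nonneg) (simp add: mult_nonneg_nonneg)
  have e1: "(\<Sum>i\<in>S. \<Sum>j\<in>S. u i * u j * inner (yy i) (bb i)) = (\<Sum>i\<in>S. u i * inner (yy i) (bb i))"
    by (simp add: sum_distrib_left[symmetric] sum_distrib_right[symmetric] assms(4) mult.commute)
  have e2: "(\<Sum>i\<in>S. \<Sum>j\<in>S. u i * u j * inner (yy j) (bb j)) = (\<Sum>i\<in>S. u i * inner (yy i) (bb i))"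
    using e1 by (subst sum.swap) (simp add: mult.commute)
  have e3: "(\<Sum>i\<in>S. \<Sum>j\<in>S. u i * u j * inner (yy i) (bb j)) = inner (\<Sum>i\<in>S. u i *\<^sub>R yy i) (\<Sum>i\<in>S. u i *\<^sub>R bb i)"
  proof -
    have l: "inner (\<Sum>i\<in>S. u i *\<^sub>R yy i) z = (\<Sum>i\<in>S. u i * inner (yy i) z)" for z
      by (simp add: inner_sum_left)
    have r: "inner y (\<Sum>j\<in>S. u j *\<^sub>R bb j) = (\<Sum>j\<in>S. u j * inner y (bb j))" for y
      by (simp add: inner_sum_right)
    show ?thesis unfolding l by (simp add: r sum_distrib_left mult.assoc)
  qed
  have e4: "(\<Sum>i\<in>S. \<Sum>j\<in>S. u i * u j * inner (yy j) (bb i)) = inner (\<Sum>i\<in>S. u i *\<^sub>R yy i) (\<Sum>i\<in>S. u i *\<^sub>R bb i)"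
  proof -
    have "(\<Sum>i\<in>S. \<Sum>j\<in>S. u i * u j * inner (yy j) (bb i)) = (\<Sum>j\<in>S. \<Sum>i\<in>S. u i * u j * inner (yy j) (bb i))"
      by (rule sum.swap)
    also have "\<dots> = (\<Sum>j\<in>S. \<Sum>i\<in>S. u j * u i * inner (yy j) (bb i))"
      by (simp add: mult.commute)
    finally show ?thesis using e3 by simp
  qed
  have "(\<Sum>i\<in>S. \<Sum>j\<in>S. u i * u j * inner (yy i - yy j) (bb i - bb j)) =
     (\<Sum>i\<in>S. \<Sum>j\<in>S. u i * u j * inner (yy i) (bb i)) - (\<Sum>i\<in>S. \<Sum>j\<in>S. u i * u j * inner (yy i) (bb j))
     - (\<Sum>i\<in>S. \<Sum>j\<in>S. u i * u j * inner (yy j) (bb i)) + (\<Sum>i\<in>S. \<Sum>j\<in>S. u i * u j * inner (yy j) (bb j))"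
    by (simp add: inner_diff sum_subtractf sum.distrib algebra_simps)
  with nn e1 e2 e3 e4 show ?thesis by linarith
qed

lemma key_sum:
  fixes A :: "'a::real_inner \<Rightarrow> 'a set"
  assumes "mono_op A" "finite S" "\<And>i. i\<in>S \<Longrightarrow> u i \<ge> 0" "sum u S = 1"
    "\<And>i. i\<in>S \<Longrightarrow> bb i \<in> A (yy i)"
    and xdef: "x = (\<Sum>i\<in>S. u i *\<^sub>R mc w (yy i) (bb i))"
  shows "(\<Sum>i\<in>S. u i * mf w (yy i) (bb i) x) \<le> 0"
proof -
  define y1 where "y1 = (\<Sum>i\<in>S. u i *\<^sub>R yy i)"
  define b1 where "b1 = (\<Sum>i\<in>S. u i *\<^sub>R bb i)"
  define e where "e = w - b1"
  have sw: "(\<Sum>i\<in>S. u i *\<^sub>R w) = w"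
    using assms(4) by (simp add: scaleR_sum_left[symmetric])
  have s1: "(\<Sum>i\<in>S. u i *\<^sub>R (yy i + w - bb i)) = y1 + e"
    by (simp add: y1_def e_def b1_def scaleR_add_right scaleR_diff_right sum.distrib sum_subtractf sw)
  have hx: "x = (1/2) *\<^sub>R (y1 + e)"
    unfolding xdef mc_def s1[symmetric] by (simp add: scaleR_sum_right)
  have mfx: "mf w (yy i) (bb i) x = inner x x - inner x (yy i + w - bb i) + inner (yy i) w - inner (yy i) (bb i)" for i
    by (simp add: mf_def inner_diff inner_add inner_commute algebra_simps)
  have "(\<Sum>i\<in>S. u i * mf w (yy i) (bb i) x) =
      (\<Sum>i\<in>S. u i * inner x x) - (\<Sum>i\<in>S. u i * inner x (yy i + w - bb i))
      + (\<Sum>i\<in>S. u i * inner (yy i) w) - (\<Sum>i\<in>S. u i * inner (yy i) (bb i))"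
    by (simp add: mfx algebra_simps sum.distrib sum_subtractf)
  also have "(\<Sum>i\<in>S. u i * inner x x) = inner x x"
    using assms(4) by (simp add: sum_distrib_right[symmetric])
  also have "(\<Sum>i\<in>S. u i * inner x (yy i + w - bb i)) = inner x (y1 + e)"
    unfolding s1[symmetric] by (simp add: inner_sum_right)
  also have "(\<Sum>i\<in>S. u i * inner (yy i) w) = inner y1 w"
    by (simp add: y1_def inner_sum_left)
  finally have eq: "(\<Sum>i\<in>S. u i * mf w (yy i) (bb i) x) = inner x x - inner x (y1 + e) + inner y1 w
      - (\<Sum>i\<in>S. u i * inner (yy i) (bb i))" .
  have mono: "inner y1 b1 \<le> (\<Sum>i\<in>S. u i * inner (yy i) (bb i))"
    unfolding y1_def b1_def by (rule mono_sum[OF assms(1-5)])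
  have "inner x x - inner x (y1 + e) + inner y1 w - inner y1 b1 = - (1/4) * inner (y1 - e) (y1 - e)"
    by (simp add: hx e_def inner_add inner_diff inner_commute algebra_simps)
  moreover have "0 \<le> inner (y1 - e) (y1 - e)" by simp
  ultimately show ?thesis using eq mono by linarith
qed

lemma cont_Max:
  fixes g :: "'p \<Rightarrow> 'a::topological_space \<Rightarrow> real"
  assumes "finite P" "P \<noteq> {}" "\<And>p. p \<in> P \<Longrightarrow> continuous_on S (g p)"
  shows "continuous_on S (\<lambda>x. Max ((\<lambda>p. g p x) ` P))"
  using assms
proof (induction P rule: finite_ne_induct)
  case (singleton p)
  then show ?case by simp
next
  case (insert p F)
  have "(\<lambda>x. Max ((\<lambda>p. g p x) ` insert p F)) = (\<lambda>x. max (g p x) (Max ((\<lambda>p. g p x) ` F)))"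
    using insert by (simp add: Max_insert)
  then show ?case using insert by (auto intro!: continuous_on_max)
qed

lemma mf_expand:
  "mf w y b (x + t *\<^sub>R d) = mf w y b x + 2 * t * inner (x - mc w y b) d + t\<^sup>2 * inner d d"
  unfolding mf_eq power2_norm_eq_inner
  by (simp add: inner_add inner_diff inner_commute algebra_simps power2_eq_square)

lemma cont_mf: "continuous_on S (mf w y b)"
  unfolding mf_def by (intro continuous_intros)

lemma fin_exists:
  fixes A :: "'a::real_inner \<Rightarrow> 'a set"
  assumes mA: "mono_op A" and fP: "finite P" and neP: "P \<noteq> {}" and gP: "\<And>p. p\<in>P \<Longrightarrow> snd p \<in> A (fst p)"
  shows "\<exists>x. \<forall>p\<in>P. mf w (fst p) (snd p) x \<le> 0"
proof -
  define ff where "ff p x = mf w (fst p) (snd p) x" for p x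
  define cc where "cc p = mc w (fst p) (snd p)" for p
  define K where "K = convex hull (cc ` P)"
  define F where "F x = Max ((\<lambda>p. ff p x) ` P)" for x
  have cK: "compact K" unfolding K_def using fP by (simp add: finite_imp_compact_convex_hull)
  have neK: "K \<noteq> {}" unfolding K_def using neP by simp
  have cF: "continuous_on K F"
    unfolding F_def ff_def by (rule cont_Max[OF fP neP cont_mf])
  obtain x0 where x0K: "x0 \<in> K" and x0min: "\<And>y. y \<in> K \<Longrightarrow> F x0 \<le> F y"
    using continuous_attains_inf[OF cK neK cF] by blast
  define m where "m = F x0"
  define I where "I = {p\<in>P. ff p x0 = m}"
  have fI: "finite I" using fP by (simp add: I_def)
  have IP: "I \<subseteq> P" by (auto simp: I_def)
  have le_m: "ff p x0 \<le> m" if "p \<in> P" for p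
    unfolding m_def F_def using fP that by (intro Max_ge) auto
  have neI: "I \<noteq> {}"
  proof -
    have "m \<in> (\<lambda>p. ff p x0) ` P" unfolding m_def F_def using fP neP by (intro Max_in) auto
    then show ?thesis by (auto simp: I_def)
  qed
  have inH: "x0 \<in> convex hull (cc ` I)"
  proof (rule ccontr)
    assume nx: "x0 \<notin> convex hull (cc ` I)"
    define H where "H = convex hull (cc ` I)"
    have cH: "compact H" unfolding H_def using fI by (simp add: finite_imp_compact_convex_hull)
    have neH: "H \<noteq> {}" unfolding H_def using neI by simp
    have HK: "H \<subseteq> K" unfolding H_def K_def using IP by (intro hull_mono) auto
    have "continuous_on H (dist x0)" by (intro continuous_intros)
    then obtain q where qH: "q \<in> H" and qmin: "\<And>c. c \<in> H \<Longrightarrow> dist x0 q \<le> dist x0 c"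
      using continuous_attains_inf[OF cH neH] by blast
    have VI: "inner (x0 - q) (c - q) \<le> 0" if cH': "c \<in> H" for c
    proof (rule ccontr)
      assume "\<not> ?thesis"
      then have s0: "inner (x0 - q) (c - q) > 0" by simp
      define s where "s = inner (x0 - q) (c - q)"
      define N where "N = inner (c - q) (c - q)"
      have N0: "N \<ge> 0" by (simp add: N_def)
      define t where "t = min 1 (s / (N + 1))"
      have t0: "0 < t" "t \<le> 1" using s0 N0 by (auto simp: t_def s_def)
      have "q + t *\<^sub>R (c - q) \<in> H"
      proof -
        have "q + t *\<^sub>R (c - q) = (1 - t) *\<^sub>R q + t *\<^sub>R c" by (simp add: algebra_simps)
        moreover have "convex H" unfolding H_def by simp
        moreover have "(1 - t) *\<^sub>R q + t *\<^sub>R c \<in> H"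
          using convexD_alt[OF _ qH cH', of t] t0 unfolding H_def by simp
        ultimately show ?thesis by simp
      qed
      then have "dist x0 q \<le> dist x0 (q + t *\<^sub>R (c - q))" by (rule qmin)
      then have "(norm (x0 - q))\<^sup>2 \<le> (norm ((x0 - q) - t *\<^sub>R (c - q)))\<^sup>2"
        by (simp add: dist_norm algebra_simps power_mono)
      then have "inner (x0 - q) (x0 - q) \<le> inner (x0 - q) (x0 - q) - 2 * t * s + t\<^sup>2 * N"
        unfolding power2_norm_eq_inner s_def N_def
        by (simp add: inner_diff inner_commute algebra_simps power2_eq_square)
      then have "2 * t * s \<le> t * (t * N)" by (simp add: power2_eq_square algebra_simps)
      then have "2 * s \<le> t * N" using t0 by simp
      moreover have "t * N \<le> s / (N + 1) * N"
        using N0 by (intro mult_right_mono) (auto simp: t_def)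
      moreover have s0': "s > 0" using s0 by (simp add: s_def)
      moreover have "s / (N + 1) * N < s + s" using s0' N0
        by (simp add: field_simps) (simp add: add_nonneg_pos mult_nonneg_nonneg)
      ultimately show False by simp
    qed
    define d where "d = q - x0"
    have dnz: "d \<noteq> 0" using qH nx by (auto simp: d_def H_def)
    have dd: "inner d d > 0" using dnz by simp
    have act: "inner (x0 - cc p) d \<le> - inner d d" if "p \<in> I" for p
    proof -
      have "cc p \<in> H" unfolding H_def using that by (simp add: hull_inc)
      then have "inner (x0 - q) (cc p - q) \<le> 0" by (rule VI)
      moreover have "inner (x0 - cc p) d = - inner d d + inner (x0 - q) (cc p - q)"
        by (simp add: d_def inner_diff inner_commute algebra_simps)
      ultimately show ?thesis by simp
    qed
    have exp: "ff p (x0 + t *\<^sub>R d) = ff p x0 + 2 * t * inner (x0 - cc p) d + t\<^sup>2 * inner d d" for p t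
      unfolding ff_def cc_def by (rule mf_expand)
    have ev: "\<forall>\<^sub>F t in at_right 0. ff p (x0 + t *\<^sub>R d) < m" if pP: "p \<in> P" for p
    proof (cases "p \<in> I")
      case True
      have "\<forall>\<^sub>F t in at_right (0::real). 0 < t \<and> t < 1"
        unfolding eventually_at_right[OF zero_less_one] by (intro exI[of _ 1]) auto
      then show ?thesis
      proof (rule eventually_mono)
        fix t :: real assume t: "0 < t \<and> t < 1"
        have "ff p (x0 + t *\<^sub>R d) \<le> m + 2 * t * (- inner d d) + t\<^sup>2 * inner d d"
        proof -
          have "t * inner (x0 - cc p) d \<le> t * (- inner d d)"
            using act[OF True] t by (intro mult_left_mono) auto
          then show ?thesis using exp[of p t] True by (simp add: I_def)
        qed
        also have "\<dots> = m - t * (2 - t) * inner d d" by (simp add: power2_eq_square algebra_simps)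
        also have "\<dots> < m" using t dd by simp
        finally show "ff p (x0 + t *\<^sub>R d) < m" .
      qed
    next
      case False
      then have lt: "ff p x0 < m" using le_m[OF pP] pP by (auto simp: I_def)
      have "((\<lambda>t. ff p x0 + 2 * t * inner (x0 - cc p) d + t\<^sup>2 * inner d d) \<longlongrightarrow>
             ff p x0 + 2 * 0 * inner (x0 - cc p) d + 0\<^sup>2 * inner d d) (at_right 0)"
        by (intro tendsto_intros)
      then have "((\<lambda>t. ff p (x0 + t *\<^sub>R d)) \<longlongrightarrow> ff p x0) (at_right 0)"
        by (simp add: exp)
      then show ?thesis using lt by (rule order_tendstoD(2))
    qed
    have "\<forall>\<^sub>F t in at_right (0::real). (\<forall>p\<in>P. ff p (x0 + t *\<^sub>R d) < m) \<and> 0 < t \<and> t < 1"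
    proof (intro eventually_conj eventually_ball_finite[OF fP])
      show "\<forall>p\<in>P. \<forall>\<^sub>F t in at_right 0. ff p (x0 + t *\<^sub>R d) < m" using ev by blast
      show "\<forall>\<^sub>F t in at_right (0::real). 0 < t" by (simp add: eventually_at_right_less)
      show "\<forall>\<^sub>F t in at_right (0::real). t < 1"
        unfolding eventually_at_right[OF zero_less_one] by (intro exI[of _ 1]) auto
    qed
    then obtain t where t: "\<forall>p\<in>P. ff p (x0 + t *\<^sub>R d) < m" "0 < t" "t < 1"
      using eventually_happens[of _ "at_right (0::real)"] by (auto simp: trivial_limit_at_right_real)
    have "x0 + t *\<^sub>R d \<in> K"
    proof -
      have "x0 + t *\<^sub>R d = (1 - t) *\<^sub>R x0 + t *\<^sub>R q" by (simp add: d_def algebra_simps)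
      moreover have "convex K" unfolding K_def by simp
      moreover have "(1 - t) *\<^sub>R x0 + t *\<^sub>R q \<in> K"
        using convexD_alt[OF _ x0K, of q t] HK qH t unfolding K_def by auto
      ultimately show ?thesis by simp
    qed
    then have "m \<le> F (x0 + t *\<^sub>R d)" unfolding m_def by (rule x0min)
    moreover have "F (x0 + t *\<^sub>R d) < m" unfolding F_def using fP neP t(1) by simp
    ultimately show False by simp
  qed
  obtain u where u: "\<forall>c\<in>cc ` I. 0 \<le> u c" "sum u (cc ` I) = 1" "(\<Sum>c\<in>cc ` I. u c *\<^sub>R c) = x0"
    using inH fI by (auto simp: convex_hull_finite)
  define g where "g c = (SOME p. p \<in> I \<and> cc p = c)" for c
  have g: "g c \<in> I \<and> cc (g c) = c" if "c \<in> cc ` I" for c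
  proof -
    have "\<exists>p. p \<in> I \<and> cc p = c" using that by auto
    then show ?thesis unfolding g_def by (rule someI_ex)
  qed
  have "x0 = (\<Sum>c\<in>cc ` I. u c *\<^sub>R mc w (fst (g c)) (snd (g c)))"
    using u(3) g by (simp add: cc_def[symmetric])
  have "(\<Sum>c\<in>cc ` I. u c * mf w (fst (g c)) (snd (g c)) x0) \<le> 0"
  proof (rule key_sum[OF mA])
    show "finite (cc ` I)" using fI by simp
    show "\<And>c. c \<in> cc ` I \<Longrightarrow> 0 \<le> u c" using u(1) by blast
    show "sum u (cc ` I) = 1" by (rule u(2))
    show "\<And>c. c \<in> cc ` I \<Longrightarrow> snd (g c) \<in> A (fst (g c))" using g gP IP by blast
    show "x0 = (\<Sum>c\<in>cc ` I. u c *\<^sub>R mc w (fst (g c)) (snd (g c)))"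
      using u(3) g by (simp add: cc_def[symmetric])
  qed
  moreover have "(\<Sum>c\<in>cc ` I. u c * mf w (fst (g c)) (snd (g c)) x0) = (\<Sum>c\<in>cc ` I. u c * m)"
    using g by (intro sum.cong) (auto simp: I_def ff_def)
  ultimately have "m \<le> 0" using u(2) by (simp add: sum_distrib_right[symmetric])
  then show ?thesis using le_m unfolding ff_def by (intro exI[of _ x0]) force
qed

lemma sq_bound:
  fixes a :: "'a::real_normed_vector"
  assumes "(norm a)\<^sup>2 \<le> 6 * i\<^sup>2" "i \<ge> 0"
  shows "norm a \<le> 3 * i"
proof -
  have "(3 * i)\<^sup>2 = 9 * i\<^sup>2" by (simp add: power2_eq_square)
  moreover have "0 \<le> i\<^sup>2" by (rule zero_le_power2)
  ultimately have h: "(norm a)\<^sup>2 \<le> (3 * i)\<^sup>2" using assms(1) by linarith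
  show ?thesis by (rule power2_le_imp_le[OF h]) (simp add: assms(2))
qed

lemma inf_exists:
  fixes A :: "'a::{real_inner,complete_space} \<Rightarrow> 'a set"
  assumes mA: "mono_op A"
  shows "\<exists>x. \<forall>y b. b \<in> A y \<longrightarrow> mf w y b x \<le> 0"
proof (cases "\<exists>y b. b \<in> A y")
  case False
  then show ?thesis by auto
next
  case True
  define G where "G = {(y, b). b \<in> A y}"
  obtain p0 where p0G: "p0 \<in> G" using True by (auto simp: G_def)
  define C where "C F = {x. \<forall>p\<in>insert p0 F. mf w (fst p) (snd p) x \<le> 0}" for F
  define Fin where "Fin = {F. finite F \<and> F \<subseteq> G}"
  define mm where "mm F = Inf ((\<lambda>x. (norm x)\<^sup>2) ` C F)" for F
  define Rb where "Rb = norm (mc w (fst p0) (snd p0)) + mr w (fst p0) (snd p0)"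
  have Cne: "C F \<noteq> {}" if "F \<in> Fin" for F
  proof -
    have "\<exists>x. \<forall>p\<in>insert p0 F. mf w (fst p) (snd p) x \<le> 0"
      using that p0G by (intro fin_exists[OF mA]) (auto simp: Fin_def G_def)
    then show ?thesis by (auto simp: C_def)
  qed
  have Cball: "C F = (\<Inter>p\<in>insert p0 F. cball (mc w (fst p) (snd p)) (mr w (fst p) (snd p)))" for F
    by (auto simp: C_def mf_le0_iff)
  have Cconv: "convex (C F)" for F unfolding Cball by (intro convex_INT) auto
  have Cbd: "norm x \<le> Rb" if "x \<in> C F" for x F
  proof -
    have "x \<in> cball (mc w (fst p0) (snd p0)) (mr w (fst p0) (snd p0))" using that by (simp add: Cball)
    then have "norm (x - mc w (fst p0) (snd p0)) \<le> mr w (fst p0) (snd p0)"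
      by (simp add: dist_norm norm_minus_commute)
    then show ?thesis unfolding Rb_def using norm_triangle_sub[of x "mc w (fst p0) (snd p0)"] by linarith
  qed
  have Cmono: "C F' \<subseteq> C F" if "F \<subseteq> F'" for F F' using that by (auto simp: C_def)
  have bddb: "bdd_below ((\<lambda>x. (norm x)\<^sup>2) ` C F)" for F
    by (rule bdd_belowI[of _ 0]) auto
  have mm_le: "mm F \<le> (norm x)\<^sup>2" if "x \<in> C F" for F x
    unfolding mm_def using that bddb by (intro cInf_lower) auto
  have mm_approx: "\<exists>x\<in>C F. (norm x)\<^sup>2 < mm F + e" if "F \<in> Fin" "e > 0" for F e
  proof -
    have "Inf ((\<lambda>x. (norm x)\<^sup>2) ` C F) < mm F + e" using that by (simp add: mm_def)
    then show ?thesis using Cne[OF that(1)] bddb by (subst (asm) cInf_less_iff) auto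
  qed
  have mm_Rb: "mm F \<le> Rb\<^sup>2" if FF: "F \<in> Fin" for F
  proof -
    obtain x where "x \<in> C F" using Cne[OF FF] by auto
    then have "mm F \<le> (norm x)\<^sup>2" "norm x \<le> Rb" using mm_le Cbd by auto
    moreover have "(norm x)\<^sup>2 \<le> Rb\<^sup>2" using \<open>norm x \<le> Rb\<close> by (intro power_mono) auto
    ultimately show ?thesis by linarith
  qed
  have mm_mono: "mm F \<le> mm F'" if "F \<subseteq> F'" "F' \<in> Fin" for F F'
    unfolding mm_def using Cne[OF that(2)] Cmono[OF that(1)] bddb
    by (intro cInf_superset_mono) auto
  have para: "(norm (x - z))\<^sup>2 \<le> 2 * (norm x)\<^sup>2 + 2 * (norm z)\<^sup>2 - 4 * mm F"
    if "x \<in> C F" "z \<in> C F" for x z F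
  proof -
    have "(1 - 1/2) *\<^sub>R x + (1/2) *\<^sub>R z \<in> C F" by (rule convexD_alt[OF Cconv that]) auto
    then have "mm F \<le> (norm ((1/2) *\<^sub>R (x + z)))\<^sup>2" using mm_le by (simp add: scaleR_add_right)
    also have "\<dots> = (1/4) * (norm (x + z))\<^sup>2" by (simp add: power_mult_distrib power2_eq_square)
    also have "\<dots> = (1/4) * inner (x + z) (x + z)" by (simp add: power2_norm_eq_inner)
    finally show ?thesis unfolding power2_norm_eq_inner
      by (simp add: inner_add inner_diff inner_commute algebra_simps)
  qed
  define r where "r = Sup (mm ` Fin)"
  have Fin_ne: "Fin \<noteq> {}" by (auto simp: Fin_def intro!: exI[of _ "{}"])
  have bdda: "bdd_above (mm ` Fin)" using mm_Rb by (intro bdd_aboveI[of _ "Rb\<^sup>2"]) auto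
  have mm_r: "mm F \<le> r" if "F \<in> Fin" for F unfolding r_def using bdda that by (intro cSUP_upper)
  define e where "e n = (inverse (real (Suc n)))\<^sup>2" for n
  have e0: "e n > 0" for n by (simp add: e_def)
  have emono: "e k \<le> e n" if "n \<le> k" for n k
    unfolding e_def using that by (intro power_mono le_imp_inverse_le) auto
  have "\<exists>F\<in>Fin. r - e n < mm F" for n
  proof -
    have "r - e n < Sup (mm ` Fin)" using e0[of n] by (simp add: r_def)
    then show ?thesis using Fin_ne bdda by (subst (asm) less_cSUP_iff) auto
  qed
  then obtain FF where FF: "\<And>n. FF n \<in> Fin" "\<And>n. r - e n < mm (FF n)" by metis
  define H where "H n = (\<Union>k\<le>n. FF k)" for n
  have HFin: "H n \<in> Fin" for n using FF(1) by (auto simp: H_def Fin_def)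
  have Hmono: "H n \<subseteq> H k" if "n \<le> k" for n k using that unfolding H_def
    by (intro UN_mono) auto
  have Hr: "r - e n < mm (H n)" for n
  proof -
    have "FF n \<subseteq> H n" by (auto simp: H_def)
    then have "mm (FF n) \<le> mm (H n)" using mm_mono HFin by blast
    then show ?thesis using FF(2)[of n] by linarith
  qed
  have "\<exists>x\<in>C (H n). (norm x)\<^sup>2 < mm (H n) + e n" for n by (rule mm_approx[OF HFin e0])
  then obtain x where xC: "\<And>n. x n \<in> C (H n)" and xn: "\<And>n. (norm (x n))\<^sup>2 < mm (H n) + e n" by metis
  have close: "norm (x n - z) \<le> 3 * inverse (real (Suc n))"
    if "H n \<subseteq> F'" "F' \<in> Fin" "z \<in> C F'" "(norm z)\<^sup>2 < mm F' + e n" for n F' z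
  proof -
    have zC: "z \<in> C (H n)" using Cmono[OF that(1)] that(3) by auto
    have "(norm z)\<^sup>2 < mm (H n) + 2 * e n" using that(4) mm_r[OF that(2)] Hr[of n] by linarith
    then have "(norm (x n - z))\<^sup>2 \<le> 6 * e n" using para[OF xC zC] xn[of n] by linarith
    then show ?thesis unfolding e_def by (intro sq_bound) auto
  qed
  have dx: "dist (x n) (x k) \<le> 3 * inverse (real (Suc n))" if "n \<le> k" for n k
  proof -
    have "(norm (x k))\<^sup>2 < mm (H k) + e n" using xn[of k] emono[OF that] by linarith
    then show ?thesis unfolding dist_norm using close[OF Hmono[OF that] HFin xC] by blast
  qed
  have g0: "(\<lambda>n. 3 * inverse (real (Suc n))) \<longlonglongrightarrow> 0"
    using tendsto_mult_right_zero[OF LIMSEQ_inverse_real_of_nat, of 3] by simp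
  have "Cauchy x"
  proof (rule metric_CauchyI)
    fix eps :: real assume "eps > 0"
    then have "eventually (\<lambda>n. 3 * inverse (real (Suc n)) < eps / 2) sequentially"
      using \<open>eps > 0\<close> by (intro order_tendstoD(2)[OF g0]) simp
    then obtain N where N: "3 * inverse (real (Suc N)) < eps / 2"
      by (auto simp: eventually_sequentially)
    show "\<exists>M. \<forall>m\<ge>M. \<forall>n\<ge>M. dist (x m) (x n) < eps"
    proof (intro exI allI impI)
      fix m n assume "N \<le> m" "N \<le> n"
      then have "dist (x N) (x m) \<le> 3 * inverse (real (Suc N))" "dist (x N) (x n) \<le> 3 * inverse (real (Suc N))"
        using dx by auto
      then have "dist (x N) (x m) < eps / 2" "dist (x N) (x n) < eps / 2" using N by linarith+
      then show "dist (x m) (x n) < eps" using dist_triangle3[of "x m" "x n" "x N"] by linarith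
    qed
  qed
  then obtain L where xL: "x \<longlonglongrightarrow> L" using Cauchy_convergent_iff convergent_def by blast
  have "mf w y b L \<le> 0" if "b \<in> A y" for y b
  proof -
    define q where "q = (y, b)"
    have qG: "q \<in> G" using that by (simp add: q_def G_def)
    have HqFin: "insert q (H n) \<in> Fin" for n using HFin qG by (auto simp: Fin_def)
    have "\<exists>z\<in>C (insert q (H n)). (norm z)\<^sup>2 < mm (insert q (H n)) + e n" for n
      by (rule mm_approx[OF HqFin e0])
    then obtain z where zC: "\<And>n. z n \<in> C (insert q (H n))"
      and zn: "\<And>n. (norm (z n))\<^sup>2 < mm (insert q (H n)) + e n" by metis
    have dz: "norm (x n - z n) \<le> 3 * inverse (real (Suc n))" for n
      by (rule close[OF _ HqFin zC zn]) auto
    have "(\<lambda>n. x n - z n) \<longlonglongrightarrow> 0"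
      by (rule Lim_null_comparison[OF _ g0]) (rule always_eventually, use dz in blast)
    then have "(\<lambda>n. x n - (x n - z n)) \<longlonglongrightarrow> L - 0" by (intro tendsto_diff xL)
    then have zL: "z \<longlonglongrightarrow> L" by simp
    have "z n \<in> cball (mc w y b) (mr w y b)" for n
      using zC[of n] unfolding mf_le0_iff[symmetric] by (auto simp: C_def q_def)
    then have "L \<in> cball (mc w y b) (mr w y b)" using closed_sequentially[OF closed_cball _ zL] by blast
    then show ?thesis by (simp add: mf_le0_iff)
  qed
  then show ?thesis by blast
qed

lemma minty:
  fixes A :: "'a::{real_inner,complete_space} \<Rightarrow> 'a set"
  assumes mA: "max_mono_op A"
  shows "\<exists>x. w - x \<in> A x"
proof -
  have mo: "mono_op A" using mA by (simp add: max_mono_op_def)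
  obtain x where x: "\<And>y b. b \<in> A y \<Longrightarrow> mf w y b x \<le> 0" using inf_exists[OF mo, of w] by blast
  define B where "B z = A z \<union> (if z = x then {w - x} else {})" for z
  have key: "inner (x - y) ((w - x) - b) \<ge> 0" if "b \<in> A y" for y b
  proof -
    have "inner (x - y) ((w - x) - b) = - mf w y b x"
      unfolding mf_def by (simp add: inner_diff_right inner_add_right algebra_simps)
    then show ?thesis using x[OF that] by simp
  qed
  have "mono_op B"
    unfolding mono_op_def
  proof (intro allI impI)
    fix z1 z2 u1 u2 assume h: "u1 \<in> B z1" "u2 \<in> B z2"
    show "0 \<le> inner (z1 - z2) (u1 - u2)"
    proof (cases "u1 \<in> A z1")
      case True
      note T1 = True
      show ?thesis
      proof (cases "u2 \<in> A z2")
        case True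
        then show ?thesis using T1 mo by (simp add: mono_op_def)
      next
        case False
        then have "z2 = x" "u2 = w - x" using h(2) by (auto simp: B_def split: if_splits)
        then show ?thesis using key[OF T1]
          by (metis inner_minus_left inner_minus_right minus_diff_eq minus_minus)
      qed
    next
      case False
      then have e1: "z1 = x" "u1 = w - x" using h(1) by (auto simp: B_def split: if_splits)
      show ?thesis
      proof (cases "u2 \<in> A z2")
        case True
        then show ?thesis using key[OF True] e1 by simp
      next
        case False
        then have "z2 = x" "u2 = w - x" using h(2) by (auto simp: B_def split: if_splits)
        then show ?thesis using e1 by simp
      qed
    qed
  qed
  moreover have "\<forall>z. A z \<subseteq> B z" by (auto simp: B_def)
  ultimately have "B = A" using mA by (simp add: max_mono_op_def)
  then have "w - x \<in> A x" by (metis B_def UnI2 insertI1)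
  then show ?thesis by blast
qed

lemma res_unique:
  assumes "mono_op A" "x - y \<in> A y"
  shows "resolvent A x = y"
  unfolding resolvent_def
proof (rule the_equality)
  show "x - y \<in> A y" by (rule assms(2))
  fix y' assume h: "x - y' \<in> A y'"
  have "0 \<le> inner (y' - y) ((x - y') - (x - y))" using assms h unfolding mono_op_def by blast
  also have "(x - y') - (x - y) = - (y' - y)" by simp
  finally have "inner (y' - y) (y' - y) \<le> 0" by (simp only: inner_minus_right)
  then show "y' = y" by (metis eq_iff_diff_eq_0 inner_eq_zero_iff inner_ge_zero order_antisym)
qed

lemma res_in:
  fixes A :: "'a::{real_inner,complete_space} \<Rightarrow> 'a set"
  assumes "max_mono_op A"
  shows "x - resolvent A x \<in> A (resolvent A x)"
proof -
  obtain y where y: "x - y \<in> A y" using minty[OF assms] by blast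
  have "resolvent A x = y" using assms y by (intro res_unique) (auto simp: max_mono_op_def)
  then show ?thesis using y by simp
qed

lemma res_shift: "resolvent (lshift v A) x = resolvent A (x + v)"
proof -
  have "(x - y \<in> lshift v A y) = (x + v - y \<in> A y)" for y
  proof
    assume "x - y \<in> lshift v A y"
    then obtain u where "u \<in> A y" "x - y = u - v" by (auto simp: lshift_def)
    then show "x + v - y \<in> A y" by (metis add_diff_cancel diff_add_eq)
  next
    assume "x + v - y \<in> A y"
    moreover have "x - y = (x + v - y) - v" by simp
    ultimately show "x - y \<in> lshift v A y" unfolding lshift_def by (rule rev_image_eqI)
  qed
  then show ?thesis unfolding resolvent_def by simp
qed

theorem lemma4p1:
  fixes A B :: "'a::{real_inner, complete_space} \<Rightarrow> 'a set"
    and T :: "'a \<Rightarrow> 'a" and v :: 'a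
  assumes "max_mono_op A" and "max_mono_op B"
    and "T = DR_op A B"
    and "v = proj (closure (range (\<lambda>x. x - T x))) 0"
  shows "(normal_solutions A B v = resolvent (lshift v A) ` Fix (\<lambda>x. T (x + v))
       \<and> resolvent (lshift v A) ` Fix (\<lambda>x. T (x + v)) = resolvent A ` ((\<lambda>x. x + v) ` Fix (\<lambda>x. T (x + v)))
       \<and> resolvent A ` ((\<lambda>x. x + v) ` Fix (\<lambda>x. T (x + v))) = resolvent A ` Fix (\<lambda>x. v + T x))
       \<and> dual_normal_solutions A B v = (\<lambda>x. x - resolvent (lshift v A) x) ` Fix (\<lambda>x. T (x + v))
       \<and> (dual_normal_solutions A B v \<noteq> {} \<longleftrightarrow> normal_solutions A B v \<noteq> {})
       \<and> (normal_solutions A B v \<noteq> {} \<longleftrightarrow> v \<in> range (\<lambda>x. x - T x))"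
proof -
  note mA = assms(1) and mB = assms(2)
  have moA: "mono_op A" and moB: "mono_op B" using mA mB by (auto simp: max_mono_op_def)
  define J where "J = resolvent A"
  define JB where "JB = resolvent B"
  have JA: "y - J y \<in> A (J y)" for y unfolding J_def by (rule res_in[OF mA])
  have JBin: "y - JB y \<in> B (JB y)" for y unfolding JB_def by (rule res_in[OF mB])
  have Tdef: "T y = y - J y + JB (2 *\<^sub>R J y - y)" for y
    by (simp add: assms(3) DR_op_def J_def JB_def reflected_resolvent_def)
  have fixchar: "v + T y = y \<longleftrightarrow> v - (y - J y) \<in> B (J y - v)" for y
  proof
    assume "v + T y = y"
    then have "JB (2 *\<^sub>R J y - y) = J y - v" by (simp add: Tdef algebra_simps)
    then have "(2 *\<^sub>R J y - y) - (J y - v) \<in> B (J y - v)" using JBin[of "2 *\<^sub>R J y - y"] by simp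
    moreover have "(2 *\<^sub>R J y - y) - (J y - v) = v - (y - J y)" by (simp add: algebra_simps scaleR_2)
    ultimately show "v - (y - J y) \<in> B (J y - v)" by simp
  next
    assume h: "v - (y - J y) \<in> B (J y - v)"
    have e: "(2 *\<^sub>R J y - y) - (J y - v) = v - (y - J y)" by (simp add: algebra_simps scaleR_2)
    have "(2 *\<^sub>R J y - y) - (J y - v) \<in> B (J y - v)" unfolding e by (rule h)
    then have "JB (2 *\<^sub>R J y - y) = J y - v" unfolding JB_def by (rule res_unique[OF moB])
    then show "v + T y = y" by (simp add: Tdef algebra_simps)
  qed
  have Zchar: "z \<in> normal_solutions A B v \<longleftrightarrow> (\<exists>a. a \<in> A z \<and> v - a \<in> B (z - v))" for z
  proof
    assume "z \<in> normal_solutions A B v"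
    then obtain c d where "c \<in> (\<lambda>u. u - v) ` A z" "d \<in> B (z - v)" "0 = c + d"
      by (auto simp: normal_solutions_def op_inv_def op_sum_def lshift_def rshift_def)
    then obtain a where "a \<in> A z" "d = v - a" by (auto simp: algebra_simps)
    then show "\<exists>a. a \<in> A z \<and> v - a \<in> B (z - v)" using \<open>d \<in> B (z - v)\<close> by blast
  next
    assume "\<exists>a. a \<in> A z \<and> v - a \<in> B (z - v)"
    then obtain a where a: "a \<in> A z" "v - a \<in> B (z - v)" by blast
    have "a - v \<in> (\<lambda>u. u - v) ` A z" using a(1) by blast
    moreover have "0 = (a - v) + (v - a)" by simp
    ultimately show "z \<in> normal_solutions A B v" using a(2)
      unfolding normal_solutions_def op_inv_def op_sum_def lshift_def rshift_def by blast
  qed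
  have Kchar: "u \<in> dual_normal_solutions A B v \<longleftrightarrow> (\<exists>z. u + v \<in> A z \<and> - u \<in> B (z - v))" for u
  proof
    assume "u \<in> dual_normal_solutions A B v"
    then obtain c d where cd0: "c \<in> op_inv (lshift v A) u" "d \<in> op_vee (op_inv (rshift B v)) u" "0 = c + d"
      unfolding dual_normal_solutions_def by (auto simp: op_inv_def op_sum_def)
    have cd: "u \<in> (\<lambda>w. w - v) ` A c" "- d \<in> {x. - u \<in> B (x - v)}" "0 = c + d"
      using cd0 by (auto simp: op_inv_def lshift_def op_vee_def rshift_def)
    then have "d = - c" by (simp add: eq_neg_iff_add_eq_0 add.commute)
    moreover obtain a where "a \<in> A c" "u = a - v" using cd(1) by blast
    ultimately show "\<exists>z. u + v \<in> A z \<and> - u \<in> B (z - v)" using cd(2) by auto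
  next
    assume "\<exists>z. u + v \<in> A z \<and> - u \<in> B (z - v)"
    then obtain z where z: "u + v \<in> A z" "- u \<in> B (z - v)" by blast
    have "z \<in> op_inv (lshift v A) u"
      unfolding op_inv_def lshift_def using z(1) by (auto intro: rev_image_eqI[where x="u + v"])
    moreover have "- z \<in> op_vee (op_inv (rshift B v)) u"
      unfolding op_vee_def op_inv_def rshift_def using z(2) by auto
    moreover have "0 = z + - z" by simp
    ultimately show "u \<in> dual_normal_solutions A B v"
      unfolding dual_normal_solutions_def op_inv_def op_sum_def by blast
  qed
  define FV where "FV = Fix (\<lambda>x. v + T x)"
  define Fv where "Fv = Fix (\<lambda>x. T (x + v))"
  have FixEq: "FV = (\<lambda>x. x + v) ` Fv"
  proof
    show "FV \<subseteq> (\<lambda>x. x + v) ` Fv"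
    proof
      fix y assume "y \<in> FV"
      then have "T ((y - v) + v) = y - v" by (simp add: FV_def Fix_def algebra_simps)
      then have "y - v \<in> Fv" by (simp add: Fv_def Fix_def)
      then show "y \<in> (\<lambda>x. x + v) ` Fv" by (rule rev_image_eqI) simp
    qed
    show "(\<lambda>x. x + v) ` Fv \<subseteq> FV"
      by (auto simp: FV_def Fv_def Fix_def algebra_simps)
  qed
  have ZJ: "normal_solutions A B v = J ` FV"
  proof
    show "normal_solutions A B v \<subseteq> J ` FV"
    proof
      fix z assume "z \<in> normal_solutions A B v"
      then obtain a where a: "a \<in> A z" "v - a \<in> B (z - v)" using Zchar by blast
      have Jy: "J (z + a) = z" unfolding J_def using a(1) by (intro res_unique[OF moA]) simp
      have "v + T (z + a) = z + a" unfolding fixchar Jy using a(2) by simp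
      then have "z + a \<in> FV" by (simp add: FV_def Fix_def)
      then show "z \<in> J ` FV" using Jy by (metis image_eqI)
    qed
    show "J ` FV \<subseteq> normal_solutions A B v"
    proof
      fix z assume "z \<in> J ` FV"
      then obtain y where y: "y \<in> FV" "z = J y" by blast
      then have "v - (y - J y) \<in> B (J y - v)" using fixchar by (simp add: FV_def Fix_def)
      then show "z \<in> normal_solutions A B v" using Zchar JA y(2) by blast
    qed
  qed
  have KJ: "dual_normal_solutions A B v = (\<lambda>y. y - v - J y) ` FV"
  proof
    show "dual_normal_solutions A B v \<subseteq> (\<lambda>y. y - v - J y) ` FV"
    proof
      fix u assume "u \<in> dual_normal_solutions A B v"
      then obtain z where z: "u + v \<in> A z" "- u \<in> B (z - v)" using Kchar by blast
      have Jy: "J (z + u + v) = z" unfolding J_def using z(1) by (intro res_unique[OF moA]) simp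
      have "v + T (z + u + v) = z + u + v" unfolding fixchar Jy using z(2) by simp
      then have "z + u + v \<in> FV" by (simp add: FV_def Fix_def)
      moreover have "u = (z + u + v) - v - J (z + u + v)" using Jy by simp
      ultimately show "u \<in> (\<lambda>y. y - v - J y) ` FV" by (rule rev_image_eqI)
    qed
    show "(\<lambda>y. y - v - J y) ` FV \<subseteq> dual_normal_solutions A B v"
    proof
      fix u assume "u \<in> (\<lambda>y. y - v - J y) ` FV"
      then obtain y where y: "y \<in> FV" "u = y - v - J y" by blast
      then have "v - (y - J y) \<in> B (J y - v)" using fixchar by (simp add: FV_def Fix_def)
      moreover have "u + v = y - J y" "- u = v - (y - J y)" using y(2) by (simp_all add: algebra_simps)
      ultimately show "u \<in> dual_normal_solutions A B v" using Kchar JA by metis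
    qed
  qed
  have RS: "resolvent (lshift v A) x = J (x + v)" for x by (simp add: res_shift J_def)
  have P1: "resolvent (lshift v A) ` Fv = J ` ((\<lambda>x. x + v) ` Fv)"
    by (simp add: RS image_image)
  have P2: "(\<lambda>x. x - resolvent (lshift v A) x) ` Fv = (\<lambda>y. y - v - J y) ` FV"
    unfolding FixEq image_image RS by simp
  have P3: "normal_solutions A B v \<noteq> {} \<longleftrightarrow> v \<in> range (\<lambda>x. x - T x)"
  proof -
    have "normal_solutions A B v \<noteq> {} \<longleftrightarrow> FV \<noteq> {}" using ZJ by simp
    also have "\<dots> \<longleftrightarrow> (\<exists>x. v + T x = x)" by (auto simp: FV_def Fix_def)
    also have "\<dots> \<longleftrightarrow> v \<in> range (\<lambda>x. x - T x)"
      by (auto simp: image_iff algebra_simps)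
    finally show ?thesis .
  qed
  show ?thesis
    unfolding Fv_def[symmetric] FV_def[symmetric] J_def[symmetric]
    using ZJ KJ P1 P2 P3 FixEq by auto
qed

end
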